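(* Let $X$ and $Y$ be topological spaces with $Y$ compact, and let $f:\mathrm{Closed}(X)\to\mathrm{Closed}(Y)$ be admissible. Then $X+_fY$ is compact if and only if $f(A)\neq\emptyset$ for every non-compact $A\in\mathrm{Closed}(X)$.
   Context: $\mathrm{Closed}(X)$ is the set of closed subsets of $X$. $f$ is admissible if $f(\emptyset)=\emptyset$ and $f$ preserves finite unions. $X+_fY$ is $X\sqcup Y$ with closed sets the $D$ such that $D\cap X$ is closed in $X$, $D\cap Y$ is closed in $Y$ and $f(D\cap X)\subseteq D$. *)

theory Defs
  imports "HOL-Analysis.Analysis"
begin

text \<open>Closed(X) is represented by the predicate closedin X. A map
 f : Closed(X) -> Closed(Y) is a function on sets that sends closed sets
 of X to closed sets of Y.\<close>

definition closed_map_between :: "'a topology \<Rightarrow> 'b topology \<Rightarrow> ('a set \<Rightarrow> 'b set) \<Rightarrow> bool" where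
  "closed_map_between X Y f \<longleftrightarrow> (\<forall>A. closedin X A \<longrightarrow> closedin Y (f A))"

definition admissible :: "'a topology \<Rightarrow> ('a set \<Rightarrow> 'b set) \<Rightarrow> bool" where
  "admissible X f \<longleftrightarrow> f {} = {} \<and>
     (\<forall>A B. closedin X A \<longrightarrow> closedin X B \<longrightarrow> f (A \<union> B) = f A \<union> f B)"

definition glue_closed :: "'a topology \<Rightarrow> 'b topology \<Rightarrow> ('a set \<Rightarrow> 'b set) \<Rightarrow> ('a + 'b) set \<Rightarrow> bool" where
  "glue_closed X Y f D \<longleftrightarrow>
     D \<subseteq> topspace X <+> topspace Y \<and>
     closedin X {x. Inl x \<in> D} \<and>
     closedin Y {y. Inr y \<in> D} \<and>
     Inr ` f {x. Inl x \<in> D} \<subseteq> D"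

definition glue_top :: "'a topology \<Rightarrow> 'b topology \<Rightarrow> ('a set \<Rightarrow> 'b set) \<Rightarrow> ('a + 'b) topology" where
  "glue_top X Y f = topology (\<lambda>U. U \<subseteq> topspace X <+> topspace Y \<and>
       glue_closed X Y f ((topspace X <+> topspace Y) - U))"

end

theory Submission
  imports Defs
begin

lemma adm_mono:
  assumes "admissible X f" "closedin X A" "closedin X B" "A \<subseteq> B"
  shows "f A \<subseteq> f B"
proof -
  have "f B = f (A \<union> B)" using assms(4) by (simp add: sup_absorb2)
  also have "\<dots> = f A \<union> f B" using assms unfolding admissible_def by blast
  finally show ?thesis by blast
qed

lemma glue_closed_top:
  assumes "closed_map_between X Y f"
  shows "glue_closed X Y f (topspace X <+> topspace Y)"
proof -
  have e1: "{x. Inl x \<in> topspace X <+> topspace Y} = topspace X" by auto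
  have e2: "{x. Inr x \<in> topspace X <+> topspace Y} = topspace Y" by auto
  show ?thesis using assms closedin_subset unfolding glue_closed_def closed_map_between_def e1 e2
    by fastforce
qed

lemma glue_closed_empty:
  assumes "admissible X f"
  shows "glue_closed X Y f {}"
  using assms unfolding glue_closed_def admissible_def by auto

lemma glue_closed_Un:
  assumes "admissible X f" "glue_closed X Y f D1" "glue_closed X Y f D2"
  shows "glue_closed X Y f (D1 \<union> D2)"
proof -
  have e1: "{x. Inl x \<in> D1 \<union> D2} = {x. Inl x \<in> D1} \<union> {x. Inl x \<in> D2}" by auto
  have e2: "{x. Inr x \<in> D1 \<union> D2} = {x. Inr x \<in> D1} \<union> {x. Inr x \<in> D2}" by auto
  have l1: "closedin X {x. Inl x \<in> D1}" using assms(2) unfolding glue_closed_def by blast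
  have l2: "closedin X {x. Inl x \<in> D2}" using assms(3) unfolding glue_closed_def by blast
  have "f {x. Inl x \<in> D1 \<union> D2} = f {x. Inl x \<in> D1} \<union> f {x. Inl x \<in> D2}"
    unfolding e1 using assms(1) l1 l2 unfolding admissible_def by blast
  moreover have "closedin X ({x. Inl x \<in> D1} \<union> {x. Inl x \<in> D2})"
    using assms(2,3) unfolding glue_closed_def by (intro closedin_Un) auto
  moreover have "closedin Y ({x. Inr x \<in> D1} \<union> {x. Inr x \<in> D2})"
    using assms(2,3) unfolding glue_closed_def by (intro closedin_Un) auto
  moreover have "D1 \<union> D2 \<subseteq> topspace X <+> topspace Y"
    using assms(2,3) unfolding glue_closed_def by blast
  moreover have "Inr ` f {x. Inl x \<in> D1} \<subseteq> D1" "Inr ` f {x. Inl x \<in> D2} \<subseteq> D2"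
    using assms(2,3) unfolding glue_closed_def by blast+
  ultimately show ?thesis unfolding glue_closed_def e1 e2 by (simp add: image_Un) blast
qed

lemma glue_closed_Inter:
  assumes "admissible X f" "\<D> \<noteq> {}" "\<And>D. D \<in> \<D> \<Longrightarrow> glue_closed X Y f D"
  shows "glue_closed X Y f (\<Inter>\<D>)"
proof -
  have gD: "\<And>D. D \<in> \<D> \<Longrightarrow> D \<subseteq> topspace X <+> topspace Y \<and>
     closedin X {x. Inl x \<in> D} \<and> closedin Y {y. Inr y \<in> D} \<and> Inr ` f {x. Inl x \<in> D} \<subseteq> D"
    using assms(3) unfolding glue_closed_def by blast
  have e1: "{x. Inl x \<in> \<Inter>\<D>} = \<Inter>((\<lambda>D. {x. Inl x \<in> D}) ` \<D>)" by auto
  have e2: "{x. Inr x \<in> \<Inter>\<D>} = \<Inter>((\<lambda>D. {x. Inr x \<in> D}) ` \<D>)" by auto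
  have c1: "closedin X {x. Inl x \<in> \<Inter>\<D>}" unfolding e1
  proof (rule closedin_Inter)
    show "(\<lambda>D. {x. Inl x \<in> D}) ` \<D> \<noteq> {}" using assms(2) by simp
    show "\<And>K. K \<in> (\<lambda>D. {x. Inl x \<in> D}) ` \<D> \<Longrightarrow> closedin X K" using gD by blast
  qed
  have c2: "closedin Y {x. Inr x \<in> \<Inter>\<D>}" unfolding e2
  proof (rule closedin_Inter)
    show "(\<lambda>D. {x. Inr x \<in> D}) ` \<D> \<noteq> {}" using assms(2) by simp
    show "\<And>K. K \<in> (\<lambda>D. {x. Inr x \<in> D}) ` \<D> \<Longrightarrow> closedin Y K" using gD by blast
  qed
  have c3: "Inr ` f {x. Inl x \<in> \<Inter>\<D>} \<subseteq> D" if "D \<in> \<D>" for D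
  proof -
    have "{x. Inl x \<in> \<Inter>\<D>} \<subseteq> {x. Inl x \<in> D}" using that by blast
    then have "f {x. Inl x \<in> \<Inter>\<D>} \<subseteq> f {x. Inl x \<in> D}"
      using adm_mono[OF assms(1) c1] gD[OF that] by blast
    then show ?thesis using gD[OF that] by blast
  qed
  obtain D0 where "D0 \<in> \<D>" using assms(2) by blast
  then have c4: "\<Inter>\<D> \<subseteq> topspace X <+> topspace Y" using gD by blast
  have c5: "Inr ` f {x. Inl x \<in> \<Inter>\<D>} \<subseteq> \<Inter>\<D>" using c3 by blast
  show ?thesis unfolding glue_closed_def using c1 c2 c4 c5 by blast
qed

lemma glue_istop:
  assumes "admissible X f" "closed_map_between X Y f"
  shows "istopology (\<lambda>U. U \<subseteq> topspace X <+> topspace Y \<and>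
       glue_closed X Y f ((topspace X <+> topspace Y) - U))"
proof -
  let ?T = "topspace X <+> topspace Y"
  have 1: "S \<inter> T \<subseteq> ?T \<and> glue_closed X Y f (?T - S \<inter> T)"
    if "S \<subseteq> ?T \<and> glue_closed X Y f (?T - S)" "T \<subseteq> ?T \<and> glue_closed X Y f (?T - T)" for S T
  proof -
    have "?T - (S \<inter> T) = (?T - S) \<union> (?T - T)" by blast
    then show ?thesis using that glue_closed_Un[OF assms(1)] by auto
  qed
  have 2: "\<Union> K \<subseteq> ?T \<and> glue_closed X Y f (?T - \<Union> K)"
    if K: "\<forall>U\<in>K. U \<subseteq> ?T \<and> glue_closed X Y f (?T - U)" for K
  proof (cases "K = {}")
    case True then show ?thesis using glue_closed_top[OF assms(2)] by simp
  next
    case False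
    have "?T - \<Union>K = \<Inter>((\<lambda>U. ?T - U) ` K)" using False by blast
    then show ?thesis using K False glue_closed_Inter[OF assms(1), of "(\<lambda>U. ?T - U) ` K"]
      by auto
  qed
  show ?thesis unfolding istopology_def using 1 2 by blast
qed

lemma glue_openin:
  assumes "admissible X f" "closed_map_between X Y f"
  shows "openin (glue_top X Y f) U \<longleftrightarrow> U \<subseteq> topspace X <+> topspace Y \<and>
       glue_closed X Y f ((topspace X <+> topspace Y) - U)"
  unfolding glue_top_def using glue_istop[OF assms] by simp

lemma glue_topspace:
  assumes "admissible X f" "closed_map_between X Y f"
  shows "topspace (glue_top X Y f) = topspace X <+> topspace Y"
proof -
  have "openin (glue_top X Y f) (topspace X <+> topspace Y)"
    using glue_openin[OF assms] glue_closed_empty[OF assms(1)] by simp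
  then have "topspace X <+> topspace Y \<subseteq> topspace (glue_top X Y f)"
    by (simp add: openin_subset)
  moreover have "topspace (glue_top X Y f) \<subseteq> topspace X <+> topspace Y"
    using glue_openin[OF assms] by (metis openin_topspace)
  ultimately show ?thesis by blast
qed

lemma glue_closedin:
  assumes "admissible X f" "closed_map_between X Y f"
  shows "closedin (glue_top X Y f) D \<longleftrightarrow> glue_closed X Y f D"
proof -
  let ?T = "topspace X <+> topspace Y"
  have "closedin (glue_top X Y f) D \<longleftrightarrow> D \<subseteq> ?T \<and> glue_closed X Y f (?T - (?T - D))"
    unfolding closedin_def glue_topspace[OF assms] glue_openin[OF assms] by auto
  also have "\<dots> \<longleftrightarrow> glue_closed X Y f D"
    by (metis Diff_Diff_Int Int_absorb1 glue_closed_def inf.absorb_iff2)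
  finally show ?thesis .
qed

theorem mainTheorem12:
  fixes X :: "'a topology" and Y :: "'b topology" and f :: "'a set \<Rightarrow> 'b set"
  assumes "compact_space Y"
    and "closed_map_between X Y f"
    and "admissible X f"
  shows "compact_space (glue_top X Y f) \<longleftrightarrow>
         (\<forall>A. closedin X A \<and> \<not> compactin X A \<longrightarrow> f A \<noteq> {})"
proof
  let ?T = "topspace X <+> topspace Y"
  have cl: "\<And>D. closedin (glue_top X Y f) D \<longleftrightarrow> glue_closed X Y f D"
    using glue_closedin[OF assms(3,2)] .
  {
    assume cpt: "compact_space (glue_top X Y f)"
    show "\<forall>A. closedin X A \<and> \<not> compactin X A \<longrightarrow> f A \<noteq> {}"
    proof (intro allI impI notI)
      fix A assume A: "closedin X A \<and> \<not> compactin X A" and fA: "f A = {}"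
      have AX: "A \<subseteq> topspace X" using A closedin_subset by blast
      have "\<not> (\<forall>\<U>. (\<forall>C\<in>\<U>. closedin X C) \<and> (\<forall>\<F>. finite \<F> \<and> \<F> \<subseteq> \<U> \<longrightarrow> A \<inter> \<Inter>\<F> \<noteq> {}) \<longrightarrow> A \<inter> \<Inter>\<U> \<noteq> {})"
        using A AX unfolding compactin_fip by simp
      then obtain \<U> where U: "\<forall>C\<in>\<U>. closedin X C"
        "\<forall>\<F>. finite \<F> \<and> \<F> \<subseteq> \<U> \<longrightarrow> A \<inter> \<Inter>\<F> \<noteq> {}" "A \<inter> \<Inter>\<U> = {}"
        by blast
      define g where "g = (\<lambda>C. Inl ` (A \<inter> C) :: ('a+'b) set)"
      define \<D> where "\<D> = insert (Inl ` A) (g ` \<U>)"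
      have gc: "glue_closed X Y f (Inl ` (A \<inter> C))" if "closedin X C" for C
      proof -
        have c: "closedin X (A \<inter> C)" using A that by blast
        have "f (A \<inter> C) \<subseteq> f A" using adm_mono[OF assms(3) c] A by blast
        have e1: "{x. Inl x \<in> (Inl ` (A \<inter> C) :: ('a+'b) set)} = A \<inter> C" by auto
        have e2: "{y. Inr y \<in> (Inl ` (A \<inter> C) :: ('a+'b) set)} = {}" by auto
        show ?thesis using c AX fA \<open>f (A \<inter> C) \<subseteq> f A\<close> unfolding glue_closed_def e1 e2
          by auto
      qed
      have "\<forall>C\<in>\<D>. closedin (glue_top X Y f) C"
      proof
        fix C assume "C \<in> \<D>"
        then have "C = Inl ` (A \<inter> A) \<or> (\<exists>C'\<in>\<U>. C = Inl ` (A \<inter> C'))"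
          unfolding \<D>_def g_def by auto
        then show "closedin (glue_top X Y f) C" unfolding cl using gc U(1) A by blast
      qed
      moreover have "\<forall>\<F>. finite \<F> \<and> \<F> \<subseteq> \<D> \<longrightarrow> \<Inter>\<F> \<noteq> {}"
      proof (intro allI impI)
        fix \<F> assume F: "finite \<F> \<and> \<F> \<subseteq> \<D>"
        have s1: "\<F> - {Inl ` A} \<subseteq> g ` \<U>" using F unfolding \<D>_def by blast
        have s2: "finite (\<F> - {Inl ` A})" using F by simp
        obtain G where G: "G \<subseteq> \<U>" "finite G" "\<F> - {Inl ` A} = g ` G"
          using finite_subset_image[OF s2 s1] by blast
        have "A \<inter> \<Inter>G \<noteq> {}" using U(2) G(1,2) by blast
        then obtain a where a: "a \<in> A \<inter> \<Inter>G" by blast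
        have "Inl a \<in> \<Inter>\<F>"
        proof
          fix D assume D: "D \<in> \<F>"
          show "Inl a \<in> D"
          proof (cases "D = Inl ` A")
            case True then show ?thesis using a by simp
          next
            case False
            then have "D \<in> \<F> - {Inl ` A}" using D by simp
            then have "D \<in> g ` G" by (simp only: G(3))
            then obtain C where C: "C \<in> G" "D = g C" by (rule imageE)
            have "a \<in> C" using a C(1) by simp
            then show ?thesis using a C(2) unfolding g_def by simp
          qed
        qed
        then show "\<Inter>\<F> \<noteq> {}" by blast
      qed
      moreover have fipG: "\<And>V. (\<forall>C\<in>V. closedin (glue_top X Y f) C) \<Longrightarrow> (\<forall>F. finite F \<and> F \<subseteq> V \<longrightarrow> \<Inter>F \<noteq> {}) \<Longrightarrow> \<Inter>V \<noteq> {}"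
        using cpt unfolding compact_space_fip by blast
      ultimately have "\<Inter>\<D> \<noteq> {}" by blast
      then obtain z where z: "z \<in> \<Inter>\<D>" by blast
      have "Inl ` A \<in> \<D>" unfolding \<D>_def by simp
      then have "z \<in> Inl ` A" using z by (rule InterD[rotated])
      then obtain a where a: "z = Inl a" "a \<in> A" by blast
      have "a \<in> \<Inter>\<U>"
      proof
        fix C assume "C \<in> \<U>"
        then have "g C \<in> \<D>" unfolding \<D>_def by simp
        then have "z \<in> g C" using z by (rule InterD[rotated])
        then show "a \<in> C" using a unfolding g_def by auto
      qed
      then show False using U(3) a by blast
    qed
  }
  {
    assume H: "\<forall>A. closedin X A \<and> \<not> compactin X A \<longrightarrow> f A \<noteq> {}"
    have fipY: "\<And>V. (\<forall>C\<in>V. closedin Y C) \<Longrightarrow> (\<forall>F. finite F \<and> F \<subseteq> V \<longrightarrow> \<Inter>F \<noteq> {}) \<Longrightarrow> \<Inter>V \<noteq> {}"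
      using assms(1) unfolding compact_space_fip by blast
    have "\<Inter>\<U> \<noteq> {}" if Uc0: "\<forall>C\<in>\<U>. closedin (glue_top X Y f) C"
        and Uf0: "\<forall>\<F>. finite \<F> \<and> \<F> \<subseteq> \<U> \<longrightarrow> \<Inter>\<F> \<noteq> {}" for \<U>
    proof -
      have gD: "D \<subseteq> topspace X <+> topspace Y \<and>
         closedin X {x. Inl x \<in> D} \<and> closedin Y {y. Inr y \<in> D} \<and> Inr ` f {x. Inl x \<in> D} \<subseteq> D"
        if "D \<in> \<U>" for D
        using Uc0 that cl unfolding glue_closed_def by blast
      have Uf: "\<And>\<F>. finite \<F> \<Longrightarrow> \<F> \<subseteq> \<U> \<Longrightarrow> \<Inter>\<F> \<noteq> {}" using Uf0 by blast
      let ?r = "\<lambda>D. {y. Inr y \<in> D}"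
      let ?l = "\<lambda>D. {x. Inl x \<in> D}"
      show "\<Inter>\<U> \<noteq> {}"
      proof (cases "\<forall>G. finite G \<and> G \<subseteq> ?r ` \<U> \<longrightarrow> \<Inter>G \<noteq> {}")
        case True
        moreover have "\<forall>C\<in>?r ` \<U>. closedin Y C" using gD by blast
        ultimately have "\<Inter>(?r ` \<U>) \<noteq> {}" by (rule fipY[rotated])
        then obtain y where "y \<in> \<Inter>(?r ` \<U>)" by blast
        then have "Inr y \<in> \<Inter>\<U>" by blast
        then show ?thesis by blast
      next
        case False
        then obtain G where G: "finite G" "G \<subseteq> ?r ` \<U>" "\<Inter>G = {}" by blast
        obtain F0 where F0: "F0 \<subseteq> \<U>" "finite F0" "G = ?r ` F0"
          using finite_subset_image[OF G(1) G(2)] by blast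
        have F0ne: "F0 \<noteq> {}" using G(3) F0(3) by auto
        define A where "A = \<Inter>(?l ` F0)"
        have Acl: "closedin X A" unfolding A_def
        proof (rule closedin_Inter)
          show "?l ` F0 \<noteq> {}" using F0ne by simp
          show "\<And>K. K \<in> ?l ` F0 \<Longrightarrow> closedin X K" using gD F0(1) by blast
        qed
        have "f A \<subseteq> ?r D" if "D \<in> F0" for D
        proof -
          have D: "D \<in> \<U>" using that F0(1) by blast
          have "A \<subseteq> ?l D" unfolding A_def using that by blast
          then have "f A \<subseteq> f (?l D)" using adm_mono[OF assms(3) Acl] gD[OF D] by blast
          then show ?thesis using gD[OF D] by blast
        qed
        then have "f A \<subseteq> \<Inter>G" unfolding F0(3) by blast
        then have "f A = {}" using G(3) by blast
        then have Acpt: "compactin X A" using H Acl by blast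
        have fipA: "\<And>V. (\<forall>C\<in>V. closedin X C) \<Longrightarrow> (\<forall>F. finite F \<and> F \<subseteq> V \<longrightarrow> A \<inter> \<Inter>F \<noteq> {}) \<Longrightarrow> A \<inter> \<Inter>V \<noteq> {}"
          using Acpt unfolding compactin_fip by blast
        have "\<forall>C\<in>?l ` \<U>. closedin X C" using gD by blast
        moreover have "\<forall>\<F>. finite \<F> \<and> \<F> \<subseteq> ?l ` \<U> \<longrightarrow> A \<inter> \<Inter>\<F> \<noteq> {}"
        proof (intro allI impI)
          fix \<F> assume FF: "finite \<F> \<and> \<F> \<subseteq> ?l ` \<U>"
          obtain F1 where F1: "F1 \<subseteq> \<U>" "finite F1" "\<F> = ?l ` F1"
            using finite_subset_image[of \<F> ?l \<U>] FF by blast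
          have "\<Inter>(F0 \<union> F1) \<noteq> {}" using Uf[of "F0 \<union> F1"] F0(1,2) F1(1,2) by blast
          then obtain z where z: "z \<in> \<Inter>(F0 \<union> F1)" by blast
          obtain D0 where D0: "D0 \<in> F0" using F0ne by blast
          have "z \<in> D0" using z D0 by blast
          then have zT: "z \<in> topspace X <+> topspace Y" using gD[of D0] D0 F0(1) by blast
          have notr: "\<And>y. z \<noteq> Inr y"
          proof
            fix y assume zy: "z = Inr y"
            have "y \<in> \<Inter>G" unfolding F0(3) using z zy by blast
            then show False using G(3) by blast
          qed
          obtain x where x: "z = Inl x" using notr by (cases z) auto
          have "x \<in> A" unfolding A_def using z x by blast
          moreover have "x \<in> \<Inter>\<F>" unfolding F1(3) using z x by blast
          ultimately show "A \<inter> \<Inter>\<F> \<noteq> {}" by blast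
        qed
        ultimately have "A \<inter> \<Inter>(?l ` \<U>) \<noteq> {}" by (rule fipA)
        then obtain x where "x \<in> \<Inter>(?l ` \<U>)" by blast
        then have "Inl x \<in> \<Inter>\<U>" by blast
        then show ?thesis by blast
      qed
    qed
    then show "compact_space (glue_top X Y f)"
      unfolding compact_space_fip by blast
  }
qed

end
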